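(* Let $E=\langle S_e,I_e,P_e,\tau,O_1,\dots,O_n,\pi_e\rangle$ be a finite interpreted environment for $n$ agents, let $\varphi$ be a formula over $Prop$, and let $\Phi$ be a set of formulas each of the form $K_i\chi$ (some $i$), closed under subformulae of this form; let $\Phi_i=\{K_i\chi\in\Phi\}$. Let $E'$, the propositions $\mathrm{said}_i(\cdot)$, $\mathrm{Say}(\Phi)$ and $\mathrm{Know}(\Phi,A)$ be as defined in the context. Then the following are equivalent: (1) there is a tuple $A=\langle A_1,\dots,A_n\rangle$ of protocol automata for $E$ such that $\mathcal I(P_A,E),(r,0)\models\varphi\wedge\mathrm{Know}(\Phi,A)$ for all runs $r$ of $\mathcal I(P_A,E)$; (2) $\varphi\wedge\mathrm{Say}(\Phi)$ is realized in $E'$ by the joint protocol $P_{A'}$ of some tuple $A'$ of protocol automata for $E'$. Moreover, the same equivalence holds when in both (1) and (2) the automata are required to have finite state sets.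
   Context: Framework. $n$ agents; finite action sets $ACT_e$, $ACT_i$; joint actions $ACT=ACT_e\times ACT_1\times\cdots\times ACT_n$; atomic propositions $Prop$. A finite interpreted environment $E=\langle S_e,I_e,P_e,\tau,O_1,\dots,O_n,\pi_e\rangle$: finite state set $S_e$, initial states $I_e\subseteq S_e$, $P_e:S_e\to\mathcal P(ACT_e)\setminus\{\emptyset\}$, $\tau(\mathbf a):S_e\to S_e$ for each joint action $\mathbf a$, observation functions $O_i:S_e\to\mathcal O$, $\pi_e:S_e\to\{0,1\}^{Prop}$. A run is an infinite sequence $r=s_0s_1\dots$ with $s_0\in I_e$ and each $s_{m+1}=\tau(\langle a_e,a_1,\dots,a_n\rangle)(s_m)$ for some joint action with $a_e\in P_e(s_m)$; $r(m)=s_m$; $r[k..m]=s_k\dots s_m$. Local state $r_i(m)=O_i(s_0)\cdots O_i(s_m)$; $(r,m)\sim_i(r',m')$ iff $r_i(m)=r'_i(m')$. A protocol for agent $i$ is $P_i:\mathcal O^+\to\mathcal P(ACT_i)\setminus\{\emptyset\}$; $\mathcal R(\mathbf P,E)$ is the set of runs with $r(m+1)=\tau(\mathbf a)(r(m))$ for some $\mathbf a\in P_e(r(m))\times P_1(r_1(m))\times\cdots\times P_n(r_n(m))$ for all $m$; $\mathcal I(\mathbf P,E)$ interprets $p$ at $(r,m)$ by $\pi_e(r(m))(p)$. Formulas are built from $Prop$ by $\neg,\wedge,\bigcirc$ (next), $U$ (until), $\exists$, $K_i$; abbreviations $\Diamond\varphi=\mathrm{true}\,U\,\varphi$, $\Box\varphi=\neg\Diamond\neg\varphi$.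 Semantics at $(r,m)$, $r\in\mathcal R$: linear temporal operators along $r$; $\exists\varphi$ iff some $r'\in\mathcal R$ with $r'[0..m]=r[0..m]$ satisfies $\varphi$ at $(r',m)$; $K_i\varphi$ iff $\varphi$ holds at all $(r',m')$, $r'\in\mathcal R$, $(r',m')\sim_i(r,m)$. $\mathbf P$ realizes $\psi$ in $E$ if $\psi$ holds at $(r,0)$ for all $r\in\mathcal R(\mathbf P,E)$. Protocol automata: $A_i=\langle Q_i,q_i,\mu_i,\alpha_i\rangle$ with state set $Q_i$, initial state $q_i$, transition function $\mu_i:Q_i\times\mathcal O\to Q_i$ and action function $\alpha_i:Q_i\to\mathcal P(ACT_i)\setminus\{\emptyset\}$; $A_i(\epsilon)=q_i$, $A_i(\sigma\cdot o)=\mu_i(A_i(\sigma),o)$; its protocol is $P_{A_i}(\sigma)=\alpha_i(A_i(\sigma))$, and $P_A=\langle P_{A_1},\dots,P_{A_n}\rangle$. Define $(r,m)\approx_i^A(r',m')$ iff $A_i(r_i(m))=A_i(r'_i(m'))$, and a modality $K_i^A$: $\mathcal I,(r,m)\models K_i^A\chi$ iff $\mathcal I,(r',m')\models\chi$ for all points $(r',m')$ of $\mathcal I$ with $(r',m')\approx_i^A(r,m)$. Modified environment $E'=\langle S'_e,I'_e,P'_e,\tau',O'_1,\dots,O'_n,\pi'_e\rangle$ with agent actions $ACT'_i=ACT_i\times\mathcal P(\Phi_i)$: $S'_e=S_e\times\mathcal P(\Phi_1)\times\cdots\times\mathcal P(\Phi_n)$; $I'_e=I_e\times\{\emptyset\}\times\cdots\times\{\emptyset\}$;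 $P'_e(s,\Psi_1,\dots,\Psi_n)=P_e(s)$; $\tau'(\langle a_e,(a_1,\Psi'_1),\dots,(a_n,\Psi'_n)\rangle)(s,\Psi_1,\dots,\Psi_n)=(\tau(\langle a_e,a_1,\dots,a_n\rangle)(s),\Psi'_1,\dots,\Psi'_n)$; $O'_i(s,\Psi_1,\dots,\Psi_n)=O_i(s)$; $\pi'_e((s,\Psi_1,\dots,\Psi_n))(p)=\pi_e(s)(p)$ for $p\in Prop$, and for each $\chi\in\Phi_i$ a new atomic proposition $\mathrm{said}_i(\chi)$ with $\pi'_e((s,\Psi_1,\dots,\Psi_n))(\mathrm{said}_i(\chi))=1$ iff $\chi\in\Psi_i$. $\mathrm{Say}(\Phi)=\bigwedge_{i=1}^n\bigwedge_{K_i\chi\in\Phi}\Box(K_i\chi\equiv\bigcirc\,\mathrm{said}_i(K_i\chi))$ and $\mathrm{Know}(\Phi,A)=\bigwedge_{i=1}^n\bigwedge_{K_i\chi\in\Phi}\Box(K_i\chi\equiv K_i^A\chi)$. *)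

theory Defs
  imports Main
begin

datatype ('p, 'ag) kfml =
    FAtom 'p
  | FNeg "('p, 'ag) kfml"
  | FAnd "('p, 'ag) kfml" "('p, 'ag) kfml"
  | FNext "('p, 'ag) kfml"
  | FUntil "('p, 'ag) kfml" "('p, 'ag) kfml"
  | FExists "('p, 'ag) kfml"
  | FK 'ag "('p, 'ag) kfml"

definition FOr :: "('p,'ag) kfml \<Rightarrow> ('p,'ag) kfml \<Rightarrow> ('p,'ag) kfml" where
  "FOr a b = FNeg (FAnd (FNeg a) (FNeg b))"

text \<open>true is the derived formula (not (a and not a)); we take a := the formula at hand.\<close>
definition FTrue_of :: "('p,'ag) kfml \<Rightarrow> ('p,'ag) kfml" where
  "FTrue_of a = FNeg (FAnd a (FNeg a))"

definition FDiamond :: "('p,'ag) kfml \<Rightarrow> ('p,'ag) kfml" where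
  "FDiamond a = FUntil (FTrue_of a) a"

definition FBox :: "('p,'ag) kfml \<Rightarrow> ('p,'ag) kfml" where
  "FBox a = FNeg (FDiamond (FNeg a))"

definition FIff :: "('p,'ag) kfml \<Rightarrow> ('p,'ag) kfml \<Rightarrow> ('p,'ag) kfml" where
  "FIff a b = FAnd (FNeg (FAnd a (FNeg b))) (FNeg (FAnd b (FNeg a)))"

primrec subfmls :: "('p,'ag) kfml \<Rightarrow> ('p,'ag) kfml set" where
  "subfmls (FAtom p) = {FAtom p}"
| "subfmls (FNeg a) = insert (FNeg a) (subfmls a)"
| "subfmls (FAnd a b) = insert (FAnd a b) (subfmls a \<union> subfmls b)"
| "subfmls (FNext a) = insert (FNext a) (subfmls a)"
| "subfmls (FUntil a b) = insert (FUntil a b) (subfmls a \<union> subfmls b)"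
| "subfmls (FExists a) = insert (FExists a) (subfmls a)"
| "subfmls (FK i a) = insert (FK i a) (subfmls a)"

record ('s, 'ae, 'a, 'ag, 'o, 'p) env =
  St   :: "'s set"
  Init :: "'s set"
  ActE :: "'ae set"
  Act  :: "'ag \<Rightarrow> 'a set"
  Pe   :: "'s \<Rightarrow> 'ae set"
  Tr   :: "'ae \<Rightarrow> ('ag \<Rightarrow> 'a) \<Rightarrow> 's \<Rightarrow> 's"
  Obs  :: "'ag \<Rightarrow> 's \<Rightarrow> 'o"
  Lab  :: "'s \<Rightarrow> 'p \<Rightarrow> bool"

definition finite_env :: "('s, 'ae, 'a, 'ag, 'o, 'p) env \<Rightarrow> bool" where
  "finite_env E \<longleftrightarrow>
     finite (St E) \<and> finite (ActE E) \<and> (\<forall>i. finite (Act E i)) \<and>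
     Init E \<subseteq> St E \<and>
     (\<forall>s\<in>St E. Pe E s \<noteq> {} \<and> Pe E s \<subseteq> ActE E) \<and>
     (\<forall>s\<in>St E. \<forall>ae\<in>ActE E. \<forall>a. (\<forall>i. a i \<in> Act E i) \<longrightarrow> Tr E ae a s \<in> St E)"

definition loc :: "('s, 'ae, 'a, 'ag, 'o, 'p) env \<Rightarrow> 'ag \<Rightarrow> (nat \<Rightarrow> 's) \<Rightarrow> nat \<Rightarrow> 'o list" where
  "loc E i r m = map (\<lambda>k. Obs E i (r k)) [0..<Suc m]"

definition runs :: "('s, 'ae, 'a, 'ag, 'o, 'p) env \<Rightarrow> ('ag \<Rightarrow> 'o list \<Rightarrow> 'a set) \<Rightarrow> (nat \<Rightarrow> 's) set" where
  "runs E P = {r. r 0 \<in> Init E \<and>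
     (\<forall>m. \<exists>ae\<in>Pe E (r m). \<exists>a. (\<forall>i. a i \<in> P i (loc E i r m)) \<and> r (Suc m) = Tr E ae a (r m))}"

primrec sat :: "('s, 'ae, 'a, 'ag, 'o, 'p) env \<Rightarrow> (nat \<Rightarrow> 's) set \<Rightarrow> (nat \<Rightarrow> 's) \<Rightarrow> nat
                 \<Rightarrow> ('p, 'ag) kfml \<Rightarrow> bool" where
  "sat E R r m (FAtom p) = Lab E (r m) p"
| "sat E R r m (FNeg a) = (\<not> sat E R r m a)"
| "sat E R r m (FAnd a b) = (sat E R r m a \<and> sat E R r m b)"
| "sat E R r m (FNext a) = sat E R r (Suc m) a"
| "sat E R r m (FUntil a b) = (\<exists>k\<ge>m. sat E R r k b \<and> (\<forall>j. m \<le> j \<and> j < k \<longrightarrow> sat E R r j a))"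
| "sat E R r m (FExists a) = (\<exists>r'\<in>R. (\<forall>j\<le>m. r' j = r j) \<and> sat E R r' m a)"
| "sat E R r m (FK i a) = (\<forall>r'\<in>R. \<forall>m'. loc E i r' m' = loc E i r m \<longrightarrow> sat E R r' m' a)"

definition realizes :: "('s, 'ae, 'a, 'ag, 'o, 'p) env \<Rightarrow> ('ag \<Rightarrow> 'o list \<Rightarrow> 'a set) \<Rightarrow> ('p,'ag) kfml \<Rightarrow> bool" where
  "realizes E P \<psi> \<longleftrightarrow> (\<forall>r\<in>runs E P. sat E (runs E P) r 0 \<psi>)"

record ('q, 'o, 'a, 'ag) pautos =
  Qs    :: "'ag \<Rightarrow> 'q set"
  q0    :: "'ag \<Rightarrow> 'q"
  mu    :: "'ag \<Rightarrow> 'q \<Rightarrow> 'o \<Rightarrow> 'q"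
  alpha :: "'ag \<Rightarrow> 'q \<Rightarrow> 'a set"

definition is_pautos :: "('s, 'ae, 'a, 'ag, 'o, 'p) env \<Rightarrow> ('q, 'o, 'a, 'ag) pautos \<Rightarrow> bool" where
  "is_pautos E A \<longleftrightarrow> (\<forall>i. q0 A i \<in> Qs A i \<and>
     (\<forall>q\<in>Qs A i. \<forall>ob. mu A i q ob \<in> Qs A i) \<and>
     (\<forall>q\<in>Qs A i. alpha A i q \<noteq> {} \<and> alpha A i q \<subseteq> Act E i))"

definition finite_pautos :: "('q, 'o, 'a, 'ag) pautos \<Rightarrow> bool" where
  "finite_pautos A \<longleftrightarrow> (\<forall>i. finite (Qs A i))"

definition astate :: "('q, 'o, 'a, 'ag) pautos \<Rightarrow> 'ag \<Rightarrow> 'o list \<Rightarrow> 'q" where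
  "astate A i \<sigma> = foldl (mu A i) (q0 A i) \<sigma>"

definition pa_proto :: "('q, 'o, 'a, 'ag) pautos \<Rightarrow> 'ag \<Rightarrow> 'o list \<Rightarrow> 'a set" where
  "pa_proto A i \<sigma> = alpha A i (astate A i \<sigma>)"

definition satKA :: "('s, 'ae, 'a, 'ag, 'o, 'p) env \<Rightarrow> ('q, 'o, 'a, 'ag) pautos \<Rightarrow> 'ag
                      \<Rightarrow> (nat \<Rightarrow> 's) \<Rightarrow> nat \<Rightarrow> ('p, 'ag) kfml \<Rightarrow> bool" where
  "satKA E A i r m \<chi> \<longleftrightarrow>
     (\<forall>r'\<in>runs E (pa_proto A). \<forall>m'.
        astate A i (loc E i r' m') = astate A i (loc E i r m) \<longrightarrow> sat E (runs E (pa_proto A)) r' m' \<chi>)"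

text \<open>I(P_A,E),(r,0) |= Know(Phi,A), i.e. the conjunction over all K_i chi in Phi of
  Box (K_i chi == K_i^A chi), unfolded semantically.\<close>
definition know_holds :: "('s, 'ae, 'a, 'ag, 'o, 'p) env \<Rightarrow> ('p,'ag) kfml set \<Rightarrow> ('q, 'o, 'a, 'ag) pautos
                          \<Rightarrow> (nat \<Rightarrow> 's) \<Rightarrow> bool" where
  "know_holds E \<Phi> A r \<longleftrightarrow>
     (\<forall>i \<chi>. FK i \<chi> \<in> \<Phi> \<longrightarrow> (\<forall>m.
        sat E (runs E (pa_proto A)) r m (FK i \<chi>) \<longleftrightarrow> satKA E A i r m \<chi>))"

datatype ('p, 'ag) prop' = Orig 'p | Said 'ag "('p, 'ag) kfml"

definition Phi_i :: "('p,'ag) kfml set \<Rightarrow> 'ag \<Rightarrow> ('p,'ag) kfml set" where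
  "Phi_i \<Phi> i = {f \<in> \<Phi>. \<exists>\<chi>. f = FK i \<chi>}"

definition lift :: "('p,'ag) kfml \<Rightarrow> (('p,'ag) prop', 'ag) kfml" where
  "lift \<phi> = map_kfml Orig id \<phi>"

definition Emod :: "('s, 'ae, 'a, 'ag, 'o, 'p) env \<Rightarrow> ('p,'ag) kfml set
   \<Rightarrow> ('s \<times> ('ag \<Rightarrow> ('p,'ag) kfml set), 'ae, 'a \<times> ('p,'ag) kfml set, 'ag, 'o, ('p,'ag) prop') env" where
  "Emod E \<Phi> = \<lparr>
     St = St E \<times> {\<Psi>. \<forall>i. \<Psi> i \<subseteq> Phi_i \<Phi> i},
     Init = Init E \<times> {\<lambda>i. {}},
     ActE = ActE E,
     Act = (\<lambda>i. Act E i \<times> Pow (Phi_i \<Phi> i)),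
     Pe = (\<lambda>(s, \<Psi>). Pe E s),
     Tr = (\<lambda>ae a (s, \<Psi>). (Tr E ae (\<lambda>i. fst (a i)) s, \<lambda>i. snd (a i))),
     Obs = (\<lambda>i (s, \<Psi>). Obs E i s),
     Lab = (\<lambda>(s, \<Psi>) p. case p of Orig q \<Rightarrow> Lab E s q | Said i \<chi> \<Rightarrow> \<chi> \<in> \<Psi> i) \<rparr>"

definition Say_conjuncts :: "('p,'ag) kfml set \<Rightarrow> (('p,'ag) prop', 'ag) kfml set" where
  "Say_conjuncts \<Phi> = {FBox (FIff (lift (FK i \<chi>)) (FNext (FAtom (Said i (FK i \<chi>))))) | i \<chi>. FK i \<chi> \<in> \<Phi>}"

text \<open>phi /\ Say(Phi) is realized: a conjunction holds iff every conjunct holds.\<close>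
definition realizes_phi_Say :: "('s, 'ae, 'a, 'ag, 'o, 'p) env \<Rightarrow> ('p,'ag) kfml set \<Rightarrow> ('p,'ag) kfml
   \<Rightarrow> ('ag \<Rightarrow> 'o list \<Rightarrow> ('a \<times> ('p,'ag) kfml set) set) \<Rightarrow> bool" where
  "realizes_phi_Say E \<Phi> \<phi> P \<longleftrightarrow>
     realizes (Emod E \<Phi>) P (lift \<phi>) \<and> (\<forall>\<psi>\<in>Say_conjuncts \<Phi>. realizes (Emod E \<Phi>) P \<psi>)"

definition knowledge_set :: "('p,'ag) kfml set \<Rightarrow> bool" where
  "knowledge_set \<Phi> \<longleftrightarrow>
     (\<forall>f\<in>\<Phi>. \<exists>i \<chi>. f = FK i \<chi>) \<and>
     (\<forall>f\<in>\<Phi>. \<forall>g\<in>subfmls f. (\<exists>j \<psi>. g = FK j \<psi>) \<longrightarrow> g \<in> \<Phi>)"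

end

theory Submission
  imports Defs
begin


abbreviation pr :: "(nat \<Rightarrow> 'x \<times> 'y) \<Rightarrow> nat \<Rightarrow> 'x" where "pr r \<equiv> (\<lambda>j. fst (r j))"

definition stepok where
  "stepok F P g k \<longleftrightarrow> (\<exists>ae\<in>Pe F (g k). \<exists>a. (\<forall>i. a i \<in> P i (loc F i g k)) \<and> g (Suc k) = Tr F ae a (g k))"

lemma runs_iff: "r \<in> runs F P \<longleftrightarrow> r 0 \<in> Init F \<and> (\<forall>k. stepok F P r k)"
  by (simp add: runs_def stepok_def)

lemma loc_cong: "(\<forall>j\<le>k. g j = h j) \<Longrightarrow> loc F i g k = loc F i h k"
  unfolding loc_def by (intro map_cong) auto

lemma stepok_cong: "(\<forall>j\<le>Suc k. g j = h j) \<Longrightarrow> stepok F P g k = stepok F P h k"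
proof -
  assume h: "\<forall>j\<le>Suc k. g j = h j"
  hence "loc F i g k = loc F i h k" for i by (intro loc_cong) auto
  moreover have "g k = h k" "g (Suc k) = h (Suc k)" using h by auto
  ultimately show ?thesis unfolding stepok_def by simp
qed

definition nxt where
  "nxt F P g k = (SOME s'. \<exists>ae\<in>Pe F (g k). \<exists>a. (\<forall>i. a i \<in> P i (loc F i g k)) \<and> s' = Tr F ae a (g k))"

primrec G where
  "G F P f m 0 = f"
| "G F P f m (Suc n) = (G F P f m n)(Suc (m+n) := nxt F P (G F P f m n) (m+n))"

lemma G_mono: "j \<le> m + n \<Longrightarrow> G F P f m (n + d) j = G F P f m n j"
  by (induction d) auto

lemma G_agree: "j \<le> m + n \<Longrightarrow> j \<le> m + n' \<Longrightarrow> G F P f m n j = G F P f m n' j"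
proof (cases "n \<le> n'")
  case True
  assume "j \<le> m + n" 
  then show ?thesis using G_mono[of j m n F P f "n' - n"] True by simp
next
  case False
  assume "j \<le> m + n'"
  then show ?thesis using G_mono[of j m n' F P f "n - n'"] False by simp
qed

definition good where
  "good F P \<longleftrightarrow> Init F \<subseteq> St F \<and> (\<forall>s\<in>St F. Pe F s \<noteq> {} \<and> Pe F s \<subseteq> ActE F) \<and>
     (\<forall>s\<in>St F. \<forall>ae\<in>ActE F. \<forall>a. (\<forall>i. a i \<in> Act F i) \<longrightarrow> Tr F ae a s \<in> St F) \<and>
     (\<forall>i \<sigma>. P i \<sigma> \<noteq> {} \<and> P i \<sigma> \<subseteq> Act F i)"

lemma stepok_St: "good F P \<Longrightarrow> g k \<in> St F \<Longrightarrow> stepok F P g k \<Longrightarrow> g (Suc k) \<in> St F"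
proof -
  assume g: "good F P" "g k \<in> St F" "stepok F P g k"
  then obtain ae a where "ae \<in> Pe F (g k)" "\<forall>i. a i \<in> P i (loc F i g k)" "g (Suc k) = Tr F ae a (g k)"
    unfolding stepok_def by blast
  moreover have "ae \<in> ActE F" using g(1,2) calculation(1) unfolding good_def by blast
  moreover have "\<forall>i. a i \<in> Act F i" using g(1) calculation(2) unfolding good_def by blast
  ultimately show ?thesis using g(1,2) unfolding good_def by simp
qed

lemma prefix_St: "good F P \<Longrightarrow> f 0 \<in> Init F \<Longrightarrow> \<forall>k<m. stepok F P f k \<Longrightarrow> k \<le> m \<Longrightarrow> f k \<in> St F"
proof (induction k)
  case 0
  have "Init F \<subseteq> St F" using 0(1) unfolding good_def by simp
  then show ?case using 0(2) by blast
next
  case (Suc k)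
  have "f k \<in> St F" using Suc by simp
  moreover have "stepok F P f k" using Suc by simp
  ultimately show ?case using stepok_St[OF Suc(2)] by blast
qed

lemma nxt_ok: assumes "good F P" "g k \<in> St F"
  shows "stepok F P (g(Suc k := nxt F P g k)) k"
proof -
  have "Pe F (g k) \<noteq> {}" using assms unfolding good_def by simp
  then obtain ae where ae: "ae \<in> Pe F (g k)" by blast
  define a where "a = (\<lambda>i. SOME x. x \<in> P i (loc F i g k))"
  have ne: "P i \<sigma> \<noteq> {}" for i \<sigma> using assms(1) unfolding good_def by simp
  have "\<forall>i. a i \<in> P i (loc F i g k)" unfolding a_def
    using ne by (simp add: some_in_eq)
  hence "\<exists>s'. \<exists>ae\<in>Pe F (g k). \<exists>a. (\<forall>i. a i \<in> P i (loc F i g k)) \<and> s' = Tr F ae a (g k)"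
    using ae by blast
  hence nx: "\<exists>ae\<in>Pe F (g k). \<exists>a. (\<forall>i. a i \<in> P i (loc F i g k)) \<and> nxt F P g k = Tr F ae a (g k)"
    unfolding nxt_def by (rule someI_ex)
  have "loc F i (g(Suc k := nxt F P g k)) k = loc F i g k" for i by (intro loc_cong) auto
  with nx show ?thesis unfolding stepok_def by simp
qed

lemma G_inv: assumes "good F P" "f 0 \<in> Init F" "\<forall>k<m. stepok F P f k"
  shows "(\<forall>k<m+n. stepok F P (G F P f m n) k) \<and> G F P f m n (m+n) \<in> St F"
proof (induction n)
  case 0
  have "f m \<in> St F" using prefix_St[OF assms, of m] by simp
  then show ?case using assms(3) by simp
next
  case (Suc n)
  let ?g = "G F P f m n"
  have IH1: "\<forall>k<m+n. stepok F P ?g k" and IH2: "?g (m+n) \<in> St F" using Suc by blast+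
  have G1: "G F P f m (Suc n) = ?g(Suc (m+n) := nxt F P ?g (m+n))" by simp
  have st: "stepok F P (G F P f m (Suc n)) k" if "k < m + Suc n" for k
  proof (cases "k < m + n")
    case True
    have "stepok F P (G F P f m (Suc n)) k = stepok F P ?g k"
      by (rule stepok_cong) (use True in auto)
    then show ?thesis using IH1 True by simp
  next
    case False
    hence "k = m + n" using that by simp
    then show ?thesis unfolding G1 using nxt_ok[OF assms(1), of ?g "m+n"] IH2 by simp
  qed
  have "stepok F P (G F P f m (Suc n)) (m+n)" using st by simp
  moreover have "G F P f m (Suc n) (m+n) \<in> St F" using IH2 by simp
  ultimately have "G F P f m (Suc n) (Suc (m+n)) \<in> St F" using stepok_St[OF assms(1), of "G F P f m (Suc n)" "m+n"] by simp
  then show ?case using st by (simp del: G.simps)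
qed

lemma extend: assumes "good F P" "f 0 \<in> Init F" "\<forall>k<m. stepok F P f k"
  shows "\<exists>r\<in>runs F P. \<forall>j\<le>m. r j = f j"
proof -
  define r where "r = (\<lambda>k. G F P f m k k)"
  have rG: "r j = G F P f m n j" if "j \<le> m + n" for j n
    unfolding r_def by (rule G_agree) (use that in auto)
  have "r 0 = f 0" using rG[of 0 0] by simp
  hence i0: "r 0 \<in> Init F" using assms(2) by simp
  have stp: "stepok F P r k" for k
  proof -
    have "stepok F P (G F P f m (Suc k)) k" using G_inv[OF assms, of "Suc k"] by (simp del: G.simps)
    moreover have "stepok F P r k = stepok F P (G F P f m (Suc k)) k"
    proof (rule stepok_cong, intro allI impI)
      fix j assume "j \<le> Suc k"
      then show "r j = G F P f m (Suc k) j" by (intro rG) simp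
    qed
    ultimately show ?thesis by simp
  qed
  have "r \<in> runs F P" unfolding runs_iff using i0 stp by blast
  moreover have "\<forall>j\<le>m. r j = f j"
  proof (intro allI impI)
    fix j assume "j \<le> m"
    then show "r j = f j" using rG[of j 0] by simp
  qed
  ultimately show ?thesis by blast
qed


lemma loc_Emod: "loc (Emod E \<Phi>) i r k = loc E i (pr r) k"
  unfolding loc_def by (simp add: Emod_def split_beta)
lemma Pe_Emod: "Pe (Emod E \<Phi>) x = Pe E (fst x)"
  by (simp add: Emod_def split_beta)
lemma Tr_Emod: "Tr (Emod E \<Phi>) ae a x = (Tr E ae (\<lambda>i. fst (a i)) (fst x), \<lambda>i. snd (a i))"
  by (simp add: Emod_def split_beta)
lemma Init_Emod: "Init (Emod E \<Phi>) = Init E \<times> {\<lambda>i. {}}"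
  by (simp add: Emod_def)
lemma St_Emod: "St (Emod E \<Phi>) = St E \<times> {\<Psi>. \<forall>i. \<Psi> i \<subseteq> Phi_i \<Phi> i}"
  by (simp add: Emod_def)
lemma ActE_Emod: "ActE (Emod E \<Phi>) = ActE E"
  by (simp add: Emod_def)
lemma Act_Emod: "Act (Emod E \<Phi>) i = Act E i \<times> Pow (Phi_i \<Phi> i)"
  by (simp add: Emod_def)
lemma Lab_Emod1: "Lab (Emod E \<Phi>) x (Orig p) = Lab E (fst x) p"
  by (simp add: Emod_def split_beta)
lemma Lab_Emod2: "Lab (Emod E \<Phi>) x (Said i f) = (f \<in> snd x i)"
  by (simp add: Emod_def split_beta)

lemma foldl_Qs: "is_pautos F A \<Longrightarrow> q \<in> Qs A i \<Longrightarrow> foldl (mu A i) q \<sigma> \<in> Qs A i"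
  by (induction \<sigma> arbitrary: q) (auto simp: is_pautos_def)

lemma astate_Qs: "is_pautos F A \<Longrightarrow> astate A i \<sigma> \<in> Qs A i"
  unfolding astate_def by (rule foldl_Qs[of F]) (auto simp: is_pautos_def)

lemma good_Emod: assumes fe: "finite_env E" and pa: "is_pautos (Emod E \<Phi>) A'"
  shows "good (Emod E \<Phi>) (pa_proto A')"
proof -
  have g1: "Init (Emod E \<Phi>) \<subseteq> St (Emod E \<Phi>)"
    using fe unfolding Init_Emod St_Emod finite_env_def by auto
  have g2: "Pe (Emod E \<Phi>) s \<noteq> {} \<and> Pe (Emod E \<Phi>) s \<subseteq> ActE (Emod E \<Phi>)" if "s \<in> St (Emod E \<Phi>)" for s
  proof -
    have "fst s \<in> St E" using that unfolding St_Emod by auto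
    then show ?thesis using fe unfolding Pe_Emod ActE_Emod finite_env_def by blast
  qed
  have g3: "Tr (Emod E \<Phi>) ae a s \<in> St (Emod E \<Phi>)"
    if "s \<in> St (Emod E \<Phi>)" "ae \<in> ActE (Emod E \<Phi>)" "\<forall>i. a i \<in> Act (Emod E \<Phi>) i" for s ae a
  proof -
    have s: "fst s \<in> St E" using that unfolding St_Emod by auto
    have ae: "ae \<in> ActE E" using that unfolding ActE_Emod by simp
    have a1: "\<forall>i. fst (a i) \<in> Act E i" and a2: "\<forall>i. snd (a i) \<subseteq> Phi_i \<Phi> i"
      using that(3) unfolding Act_Emod by (auto simp: mem_Times_iff)
    have cl: "\<forall>s\<in>St E. \<forall>ae\<in>ActE E. \<forall>a. (\<forall>i. a i \<in> Act E i) \<longrightarrow> Tr E ae a s \<in> St E"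
      using fe unfolding finite_env_def by simp
    have "Tr E ae (\<lambda>i. fst (a i)) (fst s) \<in> St E"
      using cl[rule_format, OF s ae, of "\<lambda>i. fst (a i)"] a1 by simp
    then show ?thesis unfolding Tr_Emod St_Emod using a2 by simp
  qed
  have g4: "pa_proto A' i \<sigma> \<noteq> {} \<and> pa_proto A' i \<sigma> \<subseteq> Act (Emod E \<Phi>) i" for i \<sigma>
    using astate_Qs[OF pa, of i \<sigma>] pa unfolding pa_proto_def is_pautos_def by blast
  show ?thesis unfolding good_def using g1 g2 g3 g4 by blast
qed

definition projA :: "('q, 'o, 'a \<times> 'x, 'ag) pautos \<Rightarrow> ('q, 'o, 'a, 'ag) pautos" where
  "projA A' = \<lparr>Qs = Qs A', q0 = q0 A', mu = mu A', alpha = (\<lambda>i q. fst ` alpha A' i q)\<rparr>"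

lemma astate_projA: "astate (projA A') = astate A'"
  by (simp add: astate_def projA_def fun_eq_iff)

lemma pa_proto_projA: "pa_proto (projA A') i \<sigma> = fst ` pa_proto A' i \<sigma>"
  by (simp add: pa_proto_def astate_projA) (simp add: projA_def)

lemma L1: assumes "r \<in> runs (Emod E \<Phi>) (pa_proto A')"
  shows "pr r \<in> runs E (pa_proto (projA A'))"
  unfolding runs_iff
proof (intro conjI allI)
  have "r 0 \<in> Init (Emod E \<Phi>)" using assms unfolding runs_iff by blast
  then show "pr r 0 \<in> Init E" unfolding Init_Emod by auto
next
  fix k
  have "stepok (Emod E \<Phi>) (pa_proto A') r k" using assms unfolding runs_iff by blast
  then obtain ae a where ae: "ae \<in> Pe E (fst (r k))"
    and a: "\<forall>i. a i \<in> pa_proto A' i (loc E i (pr r) k)"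
    and rs: "r (Suc k) = (Tr E ae (\<lambda>i. fst (a i)) (fst (r k)), \<lambda>i. snd (a i))"
    unfolding stepok_def Pe_Emod loc_Emod Tr_Emod by blast
  have "\<forall>i. fst (a i) \<in> pa_proto (projA A') i (loc E i (pr r) k)"
    using a unfolding pa_proto_projA by blast
  then show "stepok E (pa_proto (projA A')) (pr r) k"
    unfolding stepok_def using ae rs by (intro bexI[OF _ ae] exI[of _ "\<lambda>i. fst (a i)"]) simp
qed


lemma splice:
  assumes f0: "f 0 \<in> Init (Emod E \<Phi>)"
  and fs: "\<forall>k<m. stepok (Emod E \<Phi>) (pa_proto A') f k"
  and r2: "r2 \<in> runs E (pa_proto (projA A'))"
  and ag: "\<forall>j\<le>m. r2 j = fst (f j)"
  shows "\<exists>r''\<in>runs (Emod E \<Phi>) (pa_proto A'). (\<forall>j\<le>m. r'' j = f j) \<and> pr r'' = r2"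
proof -
  have "\<forall>k. \<exists>ae a. ae \<in> Pe E (r2 k) \<and> (\<forall>i. a i \<in> pa_proto (projA A') i (loc E i r2 k)) \<and> r2 (Suc k) = Tr E ae a (r2 k)"
    using r2 unfolding runs_iff stepok_def by blast
  then obtain AE AA where AEA: "\<And>k. AE k \<in> Pe E (r2 k) \<and> (\<forall>i. AA k i \<in> pa_proto (projA A') i (loc E i r2 k)) \<and> r2 (Suc k) = Tr E (AE k) (AA k) (r2 k)"
    by metis
  have "\<forall>i k. \<exists>b. b \<in> pa_proto A' i (loc E i r2 k) \<and> fst b = AA k i"
  proof (intro allI)
    fix i k
    have "AA k i \<in> fst ` pa_proto A' i (loc E i r2 k)" using AEA[of k] unfolding pa_proto_projA by blast
    then show "\<exists>b. b \<in> pa_proto A' i (loc E i r2 k) \<and> fst b = AA k i" by force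
  qed
  then obtain C where C: "\<And>i k. C i k \<in> pa_proto A' i (loc E i r2 k) \<and> fst (C i k) = AA k i"
    by metis
  define r'' where "r'' k = (if k \<le> m then f k else (r2 k, \<lambda>i. snd (C i (k - 1))))" for k
  have prr: "pr r'' = r2"
  proof
    fix j show "fst (r'' j) = r2 j" using ag by (simp add: r''_def)
  qed
  have "r'' 0 \<in> Init (Emod E \<Phi>)" using f0 by (simp add: r''_def)
  moreover have "stepok (Emod E \<Phi>) (pa_proto A') r'' k" for k
  proof (cases "k < m")
    case True
    have "stepok (Emod E \<Phi>) (pa_proto A') r'' k = stepok (Emod E \<Phi>) (pa_proto A') f k"
      by (rule stepok_cong) (use True in \<open>auto simp: r''_def\<close>)
    with fs True show ?thesis by simp
  next
    case False
    have e1: "fst (r'' k) = r2 k" using prr by (metis)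
    have e2: "r'' (Suc k) = (r2 (Suc k), \<lambda>i. snd (C i k))" using False by (simp add: r''_def)
    have lo: "loc (Emod E \<Phi>) i r'' k = loc E i r2 k" for i by (simp add: loc_Emod prr)
    have fC: "(\<lambda>i. fst (C i k)) = AA k" using C by auto
    show ?thesis unfolding stepok_def Pe_Emod Tr_Emod e1 e2 lo fC
      by (intro bexI[of _ "AE k"] exI[of _ "\<lambda>i. C i k"]) (use AEA C in auto)
  qed
  ultimately have "r'' \<in> runs (Emod E \<Phi>) (pa_proto A')" unfolding runs_iff by blast
  moreover have "\<forall>j\<le>m. r'' j = f j" by (simp add: r''_def)
  ultimately show ?thesis using prr by blast
qed

lemma lift_simps[simp]:
  "lift (FAtom p) = FAtom (Orig p)"
  "lift (FNeg a) = FNeg (lift a)"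
  "lift (FAnd a b) = FAnd (lift a) (lift b)"
  "lift (FNext a) = FNext (lift a)"
  "lift (FUntil a b) = FUntil (lift a) (lift b)"
  "lift (FExists a) = FExists (lift a)"
  "lift (FK i a) = FK i (lift a)"
  by (simp_all add: lift_def)

lemma sat_FBox: "sat F R r m (FBox a) \<longleftrightarrow> (\<forall>k\<ge>m. sat F R r k a)"
  by (auto simp: FBox_def FDiamond_def FTrue_of_def)

lemma sat_FIff: "sat F R r m (FIff a b) \<longleftrightarrow> (sat F R r m a \<longleftrightarrow> sat F R r m b)"
  by (auto simp: FIff_def)

lemma transfer:
  assumes a: "\<And>r'. r' \<in> R' \<Longrightarrow> pr r' \<in> R"
  and b: "\<And>r2. r2 \<in> R \<Longrightarrow> \<exists>r'\<in>R'. pr r' = r2"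
  and c: "\<And>r' r2 m. r' \<in> R' \<Longrightarrow> r2 \<in> R \<Longrightarrow> \<forall>j\<le>m. r2 j = fst (r' j) \<Longrightarrow>
            \<exists>r''\<in>R'. (\<forall>j\<le>m. r'' j = r' j) \<and> pr r'' = r2"
  shows "r' \<in> R' \<Longrightarrow> sat (Emod E \<Phi>) R' r' m (lift \<psi>) = sat E R (pr r') m \<psi>"
proof (induction \<psi> arbitrary: r' m)
  case (FAtom p) then show ?case by (simp add: Lab_Emod1)
next
  case (FNeg a) then show ?case by simp
next
  case (FAnd a b) then show ?case by simp
next
  case (FNext a) then show ?case by simp
next
  case (FUntil a b) then show ?case by simp
next
  case (FExists a)
  show ?case
  proof
    assume "sat (Emod E \<Phi>) R' r' m (lift (FExists a))"
    then obtain r'' where r'': "r'' \<in> R'" "\<forall>j\<le>m. r'' j = r' j" "sat (Emod E \<Phi>) R' r'' m (lift a)"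
      by auto
    have "sat E R (pr r'') m a" using FExists.IH r'' by blast
    moreover have "\<forall>j\<le>m. pr r'' j = pr r' j" using r''(2) by simp
    ultimately show "sat E R (pr r') m (FExists a)" using a[OF r''(1)] by auto
  next
    assume "sat E R (pr r') m (FExists a)"
    then obtain r2 where r2: "r2 \<in> R" "\<forall>j\<le>m. r2 j = pr r' j" "sat E R r2 m a" by auto
    obtain r'' where r'': "r'' \<in> R'" "\<forall>j\<le>m. r'' j = r' j" "pr r'' = r2"
      using c[OF FExists.prems r2(1)] r2(2) by blast
    have "sat (Emod E \<Phi>) R' r'' m (lift a)" using FExists.IH[OF r''(1)] r2(3) r''(3) by simp
    then show "sat (Emod E \<Phi>) R' r' m (lift (FExists a))" using r''(1,2) by auto
  qed
next
  case (FK i a)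
  show ?case
  proof
    assume h: "sat (Emod E \<Phi>) R' r' m (lift (FK i a))"
    show "sat E R (pr r') m (FK i a)"
    proof (simp only: sat.simps, intro ballI allI impI)
      fix r2 m' assume r2: "r2 \<in> R" "loc E i r2 m' = loc E i (pr r') m"
      obtain r'' where r'': "r'' \<in> R'" "pr r'' = r2" using b[OF r2(1)] by blast
      have "loc (Emod E \<Phi>) i r'' m' = loc (Emod E \<Phi>) i r' m" using r2(2) r''(2) by (simp add: loc_Emod)
      hence "sat (Emod E \<Phi>) R' r'' m' (lift a)" using h r''(1) by simp
      then show "sat E R r2 m' a" using FK.IH[OF r''(1)] r''(2) by simp
    qed
  next
    assume h: "sat E R (pr r') m (FK i a)"
    show "sat (Emod E \<Phi>) R' r' m (lift (FK i a))"
    proof (simp only: lift_simps sat.simps, intro ballI allI impI)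
      fix r'' m' assume r'': "r'' \<in> R'" "loc (Emod E \<Phi>) i r'' m' = loc (Emod E \<Phi>) i r' m"
      have "loc E i (pr r'') m' = loc E i (pr r') m" using r''(2) by (simp add: loc_Emod)
      hence "sat E R (pr r'') m' a" using h a[OF r''(1)] by simp
      then show "sat (Emod E \<Phi>) R' r'' m' (lift a)" using FK.IH[OF r''(1)] by simp
    qed
  qed
qed


lemma lift_run: assumes r2: "r2 \<in> runs E (pa_proto (projA A'))"
  shows "\<exists>r'\<in>runs (Emod E \<Phi>) (pa_proto A'). pr r' = r2"
proof -
  have "r2 0 \<in> Init E" using r2 unfolding runs_iff by blast
  hence "(\<lambda>k. (r2 k, \<lambda>i. {})) 0 \<in> Init (Emod E \<Phi>)" unfolding Init_Emod by simp
  from splice[where f="\<lambda>k. (r2 k, \<lambda>i. {})" and m=0, OF this _ r2] show ?thesis by auto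
qed

lemma transfer_runs:
  "r' \<in> runs (Emod E \<Phi>) (pa_proto A') \<Longrightarrow>
   sat (Emod E \<Phi>) (runs (Emod E \<Phi>) (pa_proto A')) r' m (lift \<psi>) =
   sat E (runs E (pa_proto (projA A'))) (pr r') m \<psi>"
proof (rule transfer)
  show "pr r' \<in> runs E (pa_proto (projA A'))" if "r' \<in> runs (Emod E \<Phi>) (pa_proto A')" for r'
    using L1[OF that] .
  show "\<exists>r'\<in>runs (Emod E \<Phi>) (pa_proto A'). pr r' = r2" if "r2 \<in> runs E (pa_proto (projA A'))" for r2
    using lift_run[OF that] .
  show "\<exists>r''\<in>runs (Emod E \<Phi>) (pa_proto A'). (\<forall>j\<le>m. r'' j = r' j) \<and> pr r'' = r2"
    if "r' \<in> runs (Emod E \<Phi>) (pa_proto A')" "r2 \<in> runs E (pa_proto (projA A'))"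
       "\<forall>j\<le>m. r2 j = fst (r' j)" for r' r2 m
  proof -
    have "r' 0 \<in> Init (Emod E \<Phi>)" "\<forall>k<m. stepok (Emod E \<Phi>) (pa_proto A') r' k"
      using that(1) unfolding runs_iff by blast+
    from splice[OF this that(2,3)] show ?thesis .
  qed
qed

lemma say_sem:
  assumes rs: "\<forall>\<psi>\<in>Say_conjuncts \<Phi>. realizes (Emod E \<Phi>) P \<psi>"
  and K: "FK i \<chi> \<in> \<Phi>" and r: "r' \<in> runs (Emod E \<Phi>) P"
  shows "sat (Emod E \<Phi>) (runs (Emod E \<Phi>) P) r' k (lift (FK i \<chi>)) \<longleftrightarrow> FK i \<chi> \<in> snd (r' (Suc k)) i"
proof -
  have "FBox (FIff (lift (FK i \<chi>)) (FNext (FAtom (Said i (FK i \<chi>))))) \<in> Say_conjuncts \<Phi>"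
    unfolding Say_conjuncts_def using K by blast
  hence "sat (Emod E \<Phi>) (runs (Emod E \<Phi>) P) r' 0 (FBox (FIff (lift (FK i \<chi>)) (FNext (FAtom (Said i (FK i \<chi>))))))"
    using rs r unfolding realizes_def by blast
  hence "sat (Emod E \<Phi>) (runs (Emod E \<Phi>) P) r' k (FIff (lift (FK i \<chi>)) (FNext (FAtom (Said i (FK i \<chi>)))))"
    unfolding sat_FBox by simp
  then show ?thesis unfolding sat_FIff by (simp only: sat.simps Lab_Emod2)
qed


definition PsiA where
  "PsiA E \<Phi> A i q = {f \<in> Phi_i \<Phi> i. \<exists>\<chi>. f = FK i \<chi> \<and>
     (\<forall>r'\<in>runs E (pa_proto A). \<forall>m'. astate A i (loc E i r' m') = q \<longrightarrow> sat E (runs E (pa_proto A)) r' m' \<chi>)}"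

definition mkA where
  "mkA E \<Phi> A = \<lparr>Qs = Qs A, q0 = q0 A, mu = mu A, alpha = (\<lambda>i q. alpha A i q \<times> {PsiA E \<Phi> A i q})\<rparr>"

lemma pp_mkA: "pa_proto (projA (mkA E \<Phi> A)) = pa_proto A"
  by (simp add: fun_eq_iff pa_proto_def astate_def projA_def mkA_def)

lemma astate_mkA: "astate (mkA E \<Phi> A) = astate A"
  by (simp add: fun_eq_iff astate_def mkA_def)

lemma fwd:
  assumes fe: "finite_env E" and pa: "is_pautos E A"
  and h: "\<forall>r\<in>runs E (pa_proto A). sat E (runs E (pa_proto A)) r 0 \<phi> \<and> know_holds E \<Phi> A r"
  shows "is_pautos (Emod E \<Phi>) (mkA E \<Phi> A) \<and> realizes_phi_Say E \<Phi> \<phi> (pa_proto (mkA E \<Phi> A))"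
proof -
  let ?A' = "mkA E \<Phi> A"
  let ?R = "runs E (pa_proto A)"
  let ?R' = "runs (Emod E \<Phi>) (pa_proto ?A')"
  have tr: "sat (Emod E \<Phi>) ?R' r' m (lift \<psi>) = sat E ?R (pr r') m \<psi>" if "r' \<in> ?R'" for r' m \<psi>
    using transfer_runs[OF that] unfolding pp_mkA .
  have inR: "pr r' \<in> ?R" if "r' \<in> ?R'" for r'
    using L1[OF that] unfolding pp_mkA .
  have ps: "PsiA E \<Phi> A i q \<subseteq> Phi_i \<Phi> i" for i q unfolding PsiA_def by blast
  have "is_pautos (Emod E \<Phi>) ?A'"
    using pa ps unfolding is_pautos_def mkA_def Act_Emod by (simp add: subset_iff)
  moreover have "realizes (Emod E \<Phi>) (pa_proto ?A') (lift \<phi>)"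
    unfolding realizes_def using tr inR h by blast
  moreover have "realizes (Emod E \<Phi>) (pa_proto ?A') \<psi>" if psin: "\<psi> \<in> Say_conjuncts \<Phi>" for \<psi>
  proof -
    obtain i \<chi> where K: "FK i \<chi> \<in> \<Phi>" and \<psi>: "\<psi> = FBox (FIff (lift (FK i \<chi>)) (FNext (FAtom (Said i (FK i \<chi>)))))"
      using psin unfolding Say_conjuncts_def by blast
    show ?thesis unfolding realizes_def \<psi> sat_FBox
    proof (intro ballI allI impI)
      fix r' k assume r': "r' \<in> ?R'"
      have "stepok (Emod E \<Phi>) (pa_proto ?A') r' k" using r' unfolding runs_iff by blast
      then obtain ae a where a: "\<forall>j. a j \<in> pa_proto ?A' j (loc E j (pr r') k)"
        and rs: "r' (Suc k) = (Tr E ae (\<lambda>i. fst (a i)) (fst (r' k)), \<lambda>i. snd (a i))"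
        unfolding stepok_def loc_Emod Tr_Emod by blast
      have "a i \<in> alpha A i (astate A i (loc E i (pr r') k)) \<times> {PsiA E \<Phi> A i (astate A i (loc E i (pr r') k))}"
        using a unfolding pa_proto_def astate_mkA by (simp add: mkA_def)
      hence sn: "snd (r' (Suc k)) i = PsiA E \<Phi> A i (astate A i (loc E i (pr r') k))"
        using rs by auto
      have kh: "know_holds E \<Phi> A (pr r')" using h inR[OF r'] by blast
      have KP: "FK i \<chi> \<in> Phi_i \<Phi> i" using K unfolding Phi_i_def by blast
      have "sat (Emod E \<Phi>) ?R' r' k (lift (FK i \<chi>)) \<longleftrightarrow> sat E ?R (pr r') k (FK i \<chi>)"
        using tr[OF r'] .
      also have "\<dots> \<longleftrightarrow> satKA E A i (pr r') k \<chi>" using kh K unfolding know_holds_def by blast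
      also have "\<dots> \<longleftrightarrow> FK i \<chi> \<in> snd (r' (Suc k)) i"
        unfolding sn PsiA_def satKA_def using KP by auto
      finally show "sat (Emod E \<Phi>) ?R' r' k
         (FIff (lift (FK i \<chi>)) (FNext (FAtom (Said i (FK i \<chi>)))))"
        unfolding sat_FIff by (simp only: sat.simps Lab_Emod2)
    qed
  qed
  ultimately show ?thesis unfolding realizes_phi_Say_def by blast
qed


lemma bwd:
  assumes fe: "finite_env E" and pa: "is_pautos (Emod E \<Phi>) A'"
  and rs: "realizes_phi_Say E \<Phi> \<phi> (pa_proto A')"
  shows "is_pautos E (projA A') \<and> (\<forall>r\<in>runs E (pa_proto (projA A')).
      sat E (runs E (pa_proto (projA A'))) r 0 \<phi> \<and> know_holds E \<Phi> (projA A') r)"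
proof -
  let ?A = "projA A'"
  let ?R = "runs E (pa_proto ?A)"
  let ?P' = "pa_proto A'"
  let ?R' = "runs (Emod E \<Phi>) ?P'"
  have tr: "sat (Emod E \<Phi>) ?R' r' m (lift \<psi>) = sat E ?R (pr r') m \<psi>" if "r' \<in> ?R'" for r' m \<psi>
    using transfer_runs[OF that] .
  have say: "\<forall>\<psi>\<in>Say_conjuncts \<Phi>. realizes (Emod E \<Phi>) ?P' \<psi>" and rl: "realizes (Emod E \<Phi>) ?P' (lift \<phi>)"
    using rs unfolding realizes_phi_Say_def by blast+
  have good: "good (Emod E \<Phi>) ?P'" using good_Emod[OF fe pa] .
  have "is_pautos E ?A"
    using pa unfolding is_pautos_def projA_def Act_Emod by (auto simp: subset_iff)
  moreover have "sat E ?R r 0 \<phi> \<and> know_holds E \<Phi> ?A r" if r: "r \<in> ?R" for r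
  proof
    obtain r' where r': "r' \<in> ?R'" "pr r' = r" using lift_run[OF r] by blast
    show "sat E ?R r 0 \<phi>" using rl r' tr[OF r'(1)] unfolding realizes_def by auto
    show "know_holds E \<Phi> ?A r" unfolding know_holds_def
    proof (intro allI impI)
      fix i \<chi> m assume K: "FK i \<chi> \<in> \<Phi>"
      show "sat E ?R r m (FK i \<chi>) \<longleftrightarrow> satKA E ?A i r m \<chi>"
      proof
        assume "satKA E ?A i r m \<chi>"
        then show "sat E ?R r m (FK i \<chi>)" unfolding satKA_def by auto
      next
        assume Kr: "sat E ?R r m (FK i \<chi>)"
        show "satKA E ?A i r m \<chi>" unfolding satKA_def
        proof (intro ballI allI impI)
          fix r2 m2 assume r2: "r2 \<in> ?R" and q: "astate ?A i (loc E i r2 m2) = astate ?A i (loc E i r m)"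
          have "sat (Emod E \<Phi>) ?R' r' m (lift (FK i \<chi>))"
            by (subst tr[OF r'(1)]) (simp only: r'(2) Kr)
          hence "FK i \<chi> \<in> snd (r' (Suc m)) i"
            using say_sem[OF say K r'(1), of m] by blast
          moreover have "stepok (Emod E \<Phi>) ?P' r' m" using r'(1) unfolding runs_iff by blast
          then obtain ae a where a: "\<forall>j. a j \<in> ?P' j (loc E j (pr r') m)"
            and rs: "r' (Suc m) = (Tr E ae (\<lambda>i. fst (a i)) (fst (r' m)), \<lambda>i. snd (a i))"
            unfolding stepok_def loc_Emod Tr_Emod by blast
          ultimately have bS: "FK i \<chi> \<in> snd (a i)" by simp
          have bA: "a i \<in> ?P' i (loc E i r2 m2)"
            using a q r'(2) unfolding pa_proto_def astate_projA by simp
          obtain r2' where r2': "r2' \<in> ?R'" "pr r2' = r2" using lift_run[OF r2] by blast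
          have "stepok (Emod E \<Phi>) ?P' r2' m2" using r2'(1) unfolding runs_iff by blast
          then obtain ae2 a2 where ae2: "ae2 \<in> Pe (Emod E \<Phi>) (r2' m2)"
            and a2: "\<forall>j. a2 j \<in> ?P' j (loc (Emod E \<Phi>) j r2' m2)"
            unfolding stepok_def by blast
          define f where "f k = (if k \<le> m2 then r2' k else Tr (Emod E \<Phi>) ae2 (a2(i := a i)) (r2' m2))" for k
          have f0: "f 0 \<in> Init (Emod E \<Phi>)" using r2'(1) unfolding runs_iff f_def by simp
          have fs: "\<forall>k<Suc m2. stepok (Emod E \<Phi>) ?P' f k"
          proof (intro allI impI)
            fix k assume k: "k < Suc m2"
            show "stepok (Emod E \<Phi>) ?P' f k"
            proof (cases "k < m2")
              case True
              have "stepok (Emod E \<Phi>) ?P' f k = stepok (Emod E \<Phi>) ?P' r2' k"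
                by (rule stepok_cong) (use True in \<open>auto simp: f_def\<close>)
              then show ?thesis using r2'(1) unfolding runs_iff by simp
            next
              case False
              hence km: "k = m2" using k by simp
              have lo: "loc (Emod E \<Phi>) j f m2 = loc (Emod E \<Phi>) j r2' m2" for j
                by (rule loc_cong) (simp add: f_def)
              have lo2: "loc (Emod E \<Phi>) i r2' m2 = loc E i r2 m2" using r2'(2) by (simp add: loc_Emod)
              have "\<forall>j. (a2(i := a i)) j \<in> ?P' j (loc (Emod E \<Phi>) j f m2)"
                using a2 bA lo2 unfolding lo by simp
              moreover have "f (Suc m2) = Tr (Emod E \<Phi>) ae2 (a2(i := a i)) (f m2)" by (simp add: f_def)
              moreover have "ae2 \<in> Pe (Emod E \<Phi>) (f m2)" using ae2 by (simp add: f_def)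
              ultimately show ?thesis unfolding stepok_def km by blast
            qed
          qed
          obtain r3 where r3: "r3 \<in> ?R'" "\<forall>j\<le>Suc m2. r3 j = f j"
            using extend[OF good f0 fs] by blast
          have "FK i \<chi> \<in> snd (r3 (Suc m2)) i" using r3(2) bS by (simp add: f_def Tr_Emod)
          hence "sat (Emod E \<Phi>) ?R' r3 m2 (lift (FK i \<chi>))" using say_sem[OF say K r3(1)] by blast
          hence K3: "sat E ?R (pr r3) m2 (FK i \<chi>)" using tr[OF r3(1)] by blast
          have "loc E i r2 m2 = loc E i (pr r3) m2"
            by (rule loc_cong) (use r3(2) r2'(2) in \<open>auto simp: f_def\<close>)
          then show "sat E ?R r2 m2 \<chi>" using K3 r2 by simp
        qed
      qed
    qed
  qed
  ultimately show ?thesis by blast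
qed

theorem proposition4:
  fixes E :: "('s, 'ae, 'a, 'ag :: finite, 'o, 'p) env"
    and \<Phi> :: "('p, 'ag) kfml set"
    and \<phi> :: "('p, 'ag) kfml"
  assumes "finite_env E"
    and "finite \<Phi>"
    and "knowledge_set \<Phi>"
  shows "((\<exists>A :: ('q, 'o, 'a, 'ag) pautos. is_pautos E A \<and>
             (\<forall>r\<in>runs E (pa_proto A). sat E (runs E (pa_proto A)) r 0 \<phi> \<and> know_holds E \<Phi> A r))
          \<longleftrightarrow>
          (\<exists>A' :: ('q, 'o, 'a \<times> ('p, 'ag) kfml set, 'ag) pautos. is_pautos (Emod E \<Phi>) A' \<and>
             realizes_phi_Say E \<Phi> \<phi> (pa_proto A')))
       \<and>
         ((\<exists>A :: ('q, 'o, 'a, 'ag) pautos. is_pautos E A \<and> finite_pautos A \<and>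
             (\<forall>r\<in>runs E (pa_proto A). sat E (runs E (pa_proto A)) r 0 \<phi> \<and> know_holds E \<Phi> A r))
          \<longleftrightarrow>
          (\<exists>A' :: ('q, 'o, 'a \<times> ('p, 'ag) kfml set, 'ag) pautos. is_pautos (Emod E \<Phi>) A' \<and> finite_pautos A' \<and>
             realizes_phi_Say E \<Phi> \<phi> (pa_proto A')))"
proof -
  note fe = assms(1)
  have q1: "Qs (mkA E \<Phi> A) = Qs A" for A :: "('q, 'o, 'a, 'ag) pautos" by (simp add: mkA_def)
  have q2: "Qs (projA A') = Qs A'" for A' :: "('q, 'o, 'a \<times> ('p, 'ag) kfml set, 'ag) pautos"
    by (simp add: projA_def)
  show ?thesis
  proof (intro conjI iffI)
    assume "\<exists>A :: ('q, 'o, 'a, 'ag) pautos. is_pautos E A \<and>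
             (\<forall>r\<in>runs E (pa_proto A). sat E (runs E (pa_proto A)) r 0 \<phi> \<and> know_holds E \<Phi> A r)"
    then obtain A :: "('q, 'o, 'a, 'ag) pautos" where A: "is_pautos E A"
      "\<forall>r\<in>runs E (pa_proto A). sat E (runs E (pa_proto A)) r 0 \<phi> \<and> know_holds E \<Phi> A r" by blast
    show "\<exists>A' :: ('q, 'o, 'a \<times> ('p, 'ag) kfml set, 'ag) pautos. is_pautos (Emod E \<Phi>) A' \<and>
             realizes_phi_Say E \<Phi> \<phi> (pa_proto A')" using fwd[OF fe A] by blast
  next
    assume "\<exists>A' :: ('q, 'o, 'a \<times> ('p, 'ag) kfml set, 'ag) pautos. is_pautos (Emod E \<Phi>) A' \<and>
             realizes_phi_Say E \<Phi> \<phi> (pa_proto A')"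
    then obtain A' :: "('q, 'o, 'a \<times> ('p, 'ag) kfml set, 'ag) pautos" where A': "is_pautos (Emod E \<Phi>) A'"
      "realizes_phi_Say E \<Phi> \<phi> (pa_proto A')" by blast
    show "\<exists>A :: ('q, 'o, 'a, 'ag) pautos. is_pautos E A \<and>
             (\<forall>r\<in>runs E (pa_proto A). sat E (runs E (pa_proto A)) r 0 \<phi> \<and> know_holds E \<Phi> A r)"
      using bwd[OF fe A'] by blast
  next
    assume "\<exists>A :: ('q, 'o, 'a, 'ag) pautos. is_pautos E A \<and> finite_pautos A \<and>
             (\<forall>r\<in>runs E (pa_proto A). sat E (runs E (pa_proto A)) r 0 \<phi> \<and> know_holds E \<Phi> A r)"
    then obtain A :: "('q, 'o, 'a, 'ag) pautos" where A: "is_pautos E A" "finite_pautos A"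
      "\<forall>r\<in>runs E (pa_proto A). sat E (runs E (pa_proto A)) r 0 \<phi> \<and> know_holds E \<Phi> A r" by blast
    have "finite_pautos (mkA E \<Phi> A)" using A(2) unfolding finite_pautos_def q1 .
    then show "\<exists>A' :: ('q, 'o, 'a \<times> ('p, 'ag) kfml set, 'ag) pautos. is_pautos (Emod E \<Phi>) A' \<and>
             finite_pautos A' \<and> realizes_phi_Say E \<Phi> \<phi> (pa_proto A')" using fwd[OF fe A(1,3)] by blast
  next
    assume "\<exists>A' :: ('q, 'o, 'a \<times> ('p, 'ag) kfml set, 'ag) pautos. is_pautos (Emod E \<Phi>) A' \<and>
             finite_pautos A' \<and> realizes_phi_Say E \<Phi> \<phi> (pa_proto A')"
    then obtain A' :: "('q, 'o, 'a \<times> ('p, 'ag) kfml set, 'ag) pautos" where A': "is_pautos (Emod E \<Phi>) A'"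
      "finite_pautos A'" "realizes_phi_Say E \<Phi> \<phi> (pa_proto A')" by blast
    have "finite_pautos (projA A')" using A'(2) unfolding finite_pautos_def q2 .
    then show "\<exists>A :: ('q, 'o, 'a, 'ag) pautos. is_pautos E A \<and> finite_pautos A \<and>
             (\<forall>r\<in>runs E (pa_proto A). sat E (runs E (pa_proto A)) r 0 \<phi> \<and> know_holds E \<Phi> A r)"
      using bwd[OF fe A'(1,3)] by blast
  qed
qed

end
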